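(* Let $d>1$, let $F$ be a field of characteristic $0$ or coprime to $d$ with $\mu_{d^2}\subset F$, and let $E/F$ be a cyclic Galois extension of degree $d$. Let $\mathcal{G}=\mathrm{Gal}(F_{\mathrm{sep}}/F)$, $\mathcal{H}=\mathrm{Gal}(F_{\mathrm{sep}}/E)$, and $G=\mathcal{G}/\mathcal{H}=\langle\tau\rangle$, cyclic of order $d$. Consider the discrete $\mathcal{G}$-modules (action through $G$) $\overline{M_1}=\mathbb{Z}/d\mathbb{Z}$ (trivial action), $\overline{M_2}=\overline{M_3}=(\mathbb{Z}/d\mathbb{Z})[G]$ (left multiplication), $\overline{M_4}=\mathbb{Z}/d\mathbb{Z}$ (trivial), and the maps $d_1:\overline{M_1}\to\overline{M_2}$, $n\mapsto n\sum_{g\in G}g$; $d_2:\overline{M_2}\to\overline{M_3}$, $x\mapsto x(1-\tau)$; $d_3:\overline{M_3}\to\overline{M_4}$, $\sum_g c_g g\mapsto \sum_g c_g$; and $h_2:\overline{M_3}\to\overline{M_2}$, $x\mapsto x\sum_{i=0}^{d-1}(-i)\tau^i$. Let $\ell:\overline{M_4}\to\overline{M_3}$ be the additive map $x\mapsto x\cdot 1_G$. Let $n\ge 1$ and let $c\in Z^{n-1}(\mathcal{G},\overline{M_4})$ be an inhomogeneous cocycle, and $\delta$ the coboundary of the (inhomogeneous) bar complex. Then $h_2(\delta(\ell\circ c))$ takes values in $d_1(\overline{M_1})$ and \[ -d_1^{-1}\big(h_2(\delta(\ell\circ c))\big)=-\chi_{\mathcal{H}}\smile c, \] where $\chi_{\mathcal{H}}:\mathcal{G}\to\mathbb{Z}/d\mathbb{Z}$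 is the character with $\chi_{\mathcal{H}}(g)=k$ whenever $g\mathcal{H}=\tau^k$, and $(\chi_{\mathcal{H}}\smile c)(g_1,\dots,g_n)=\chi_{\mathcal{H}}(g_1)\,c(g_2,\dots,g_n)$.
   Context: The left-hand side is the paper's connecting map $\eta(c)$ in the cyclic case; $d_1^{-1}$ denotes the inverse of the injective map $d_1$ on its image. *)

theory Defs
  imports "HOL-Algebra.Group" "HOL-Library.Function_Algebras" "HOL-Number_Theory.Cong"
begin

(* Conventions.
   * Z/dZ is represented by int, equality in Z/dZ being congruence mod d.
   * G = <tau>, cyclic of order d; tau^k is identified with k in {0..<d}.
   * An element sum_{i<d} x_i tau^i of (Z/dZ)[G] is represented by its
     coefficient function x :: nat => int (only indices i < d are meaningful).
   * The profinite group \<G> is an abstract group Gamma; its action on the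
     modules factors through G via a surjective character chi : Gamma -> Z/dZ
     (chi g = k iff g\<H> = tau^k); \<H> = kernel of chi.
   * An inhomogeneous k-cochain is a function on lists of length k. *)

definition gr_mult :: "nat \<Rightarrow> (nat \<Rightarrow> int) \<Rightarrow> (nat \<Rightarrow> int) \<Rightarrow> (nat \<Rightarrow> int)" where
  "gr_mult d x y = (\<lambda>j. \<Sum>i<d. x i * y (nat ((int j - int i) mod int d)))"

definition tau_act :: "nat \<Rightarrow> nat \<Rightarrow> (nat \<Rightarrow> int) \<Rightarrow> (nat \<Rightarrow> int)" where
  "tau_act d k x = (\<lambda>i. x (nat ((int i - int k) mod int d)))"

definition gr_act :: "nat \<Rightarrow> ('g \<Rightarrow> nat) \<Rightarrow> 'g \<Rightarrow> (nat \<Rightarrow> int) \<Rightarrow> (nat \<Rightarrow> int)" where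
  "gr_act d chi g x = tau_act d (chi g) x"

definition d1 :: "nat \<Rightarrow> int \<Rightarrow> (nat \<Rightarrow> int)" where
  "d1 d m = (\<lambda>i. m)"

definition h2 :: "nat \<Rightarrow> (nat \<Rightarrow> int) \<Rightarrow> (nat \<Rightarrow> int)" where
  "h2 d x = gr_mult d x (\<lambda>i. - int i)"

definition ell :: "int \<Rightarrow> (nat \<Rightarrow> int)" where
  "ell m = (\<lambda>i. if i = 0 then m else 0)"

definition cobdry :: "('g, 'b) monoid_scheme \<Rightarrow> ('g \<Rightarrow> 'm \<Rightarrow> 'm) \<Rightarrow> nat
    \<Rightarrow> ('g list \<Rightarrow> 'm::ab_group_add) \<Rightarrow> 'g list \<Rightarrow> 'm" where
  "cobdry G act k f gs =
     act (gs ! 0) (f (drop 1 gs))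
     + (\<Sum>i\<in>{1..k}. (let v = f (take (i - 1) gs @ [gs ! (i - 1) \<otimes>\<^bsub>G\<^esub> gs ! i] @ drop (i + 1) gs)
                       in if even i then v else - v))
     + (if even (k + 1) then f (take k gs) else - f (take k gs))"

definition cup_char :: "('g \<Rightarrow> nat) \<Rightarrow> ('g list \<Rightarrow> int) \<Rightarrow> 'g list \<Rightarrow> int" where
  "cup_char chi c gs = int (chi (gs ! 0)) * c (drop 1 gs)"

end

theory Submission
  imports Defs
begin

lemma ell_add: "ell (x + y) = ell x + ell y"
  by (auto simp: ell_def fun_eq_iff)

lemma ell_neg: "ell (- x) = - ell x"
  by (auto simp: ell_def fun_eq_iff fun_Compl_def)

lemma ell_zero: "ell 0 = 0"
  by (auto simp: ell_def fun_eq_iff)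

lemma ell_sum: "ell (sum f A) = (\<Sum>a\<in>A. ell (f a))"
  by (induction A rule: infinite_finite_induct) (auto simp: ell_zero ell_add)

lemma ell_letif: "(let v = ell x in if even (i::nat) then v else - v) = ell (let v = x in if even i then v else - v)"
  by (simp add: Let_def ell_neg)

lemma cobdry_ell:
  "cobdry G act k (\<lambda>hs. ell (c hs)) gs
   = act (gs ! 0) (ell (c (drop 1 gs))) + ell (cobdry G (\<lambda>g x. x) k c gs - c (drop 1 gs))"
  unfolding cobdry_def ell_letif ell_sum[symmetric]
  by (simp add: ell_add ell_neg)

lemma h2_eval:
  assumes "m < d" "j < d"
  shows "h2 d (\<lambda>i. tau_act d m (ell a) i + ell T i) j
     = a * (- int (nat ((int j - int m) mod int d))) + T * (- int j)"
proof -
  have d0: "d > 0" using assms by simp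
  have eq: "\<And>i. i \<in> {..<d} \<Longrightarrow> (tau_act d m (ell a) i + ell T i) * (- int (nat ((int j - int i) mod int d)))
      = (if i = m then a * (- int (nat ((int j - int m) mod int d))) else 0)
        + (if i = 0 then T * (- int j) else 0)"
  proof -
    fix i assume i: "i \<in> {..<d}"
    have "(nat ((int i - int m) mod int d) = 0) = (i = m)"
    proof
      assume "nat ((int i - int m) mod int d) = 0"
      moreover have "(int i - int m) mod int d \<ge> 0" using d0 by simp
      ultimately have "(int i - int m) mod int d = 0" by linarith
      show "i = m"
      proof (cases "i \<ge> m")
        case True
        then have "(int i - int m) mod int d = int i - int m" using i assms(1) by (simp add: mod_pos_pos_trivial)
        then show ?thesis using True \<open>(int i - int m) mod int d = 0\<close> by simp
      next
        case False
        then have "(int i - int m) mod int d = int i - int m + int d" using i assms(1)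
        proof -
          have "(int i - int m + int d) mod int d = int i - int m + int d"
            using False i assms(1) by (intro mod_pos_pos_trivial) auto
          then show ?thesis by simp
        qed
        then show ?thesis using False \<open>(int i - int m) mod int d = 0\<close> assms(1) by simp
      qed
    qed simp
    then show "?thesis i" using i assms d0
      by (auto simp: tau_act_def ell_def algebra_simps)
  qed
  have "h2 d (\<lambda>i. tau_act d m (ell a) i + ell T i) j
     = (\<Sum>i<d. (if i = m then a * (- int (nat ((int j - int m) mod int d))) else 0)
        + (if i = 0 then T * (- int j) else 0))"
    unfolding h2_def gr_mult_def using eq by (rule sum.cong[OF refl])
  also have "\<dots> = a * (- int (nat ((int j - int m) mod int d))) + T * (- int j)"
    using assms d0 by (simp add: sum.distrib)
  finally show ?thesis .
qed

lemma final_cong: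
  assumes "d > (0::nat)" "[a + T = e] (mod int d)" "[e = 0] (mod int d)" "m < d" "j < d"
  shows "[a * (- int (nat ((int j - int m) mod int d))) + T * (- int j) = int m * a] (mod int d)"
proof -
  have "[T = - a] (mod int d)"
    using assms(2,3) by (metis add.commute add_diff_cancel_left' cong_diff cong_trans cong_refl diff_0)
  then obtain r where r: "T = - a + int d * r"
    by (metis cong_iff_lin add.commute cong_sym)
  have nn: "(int j - int m) mod int d \<ge> 0" using assms by simp
  obtain q where q: "(int j - int m) mod int d = (int j - int m) - int d * q"
    by (metis minus_mult_div_eq_mod)
  have "a * (- int (nat ((int j - int m) mod int d))) + T * (- int j) - int m * a
     = int d * (a * q - r * int j)"
  proof -
    have hq: "int (nat ((int j - int m) mod int d)) = int j - int m - int d * q" using nn q by simp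
    show ?thesis unfolding r hq by (simp add: algebra_simps)
  qed
  then show ?thesis
    by (metis cong_iff_lin cong_sym add.commute diff_add_cancel mult.commute)
qed

theorem theorem4p6:
  fixes Gamma :: "('g, 'b) monoid_scheme"
    and chi :: "'g \<Rightarrow> nat" and d n :: nat and c :: "'g list \<Rightarrow> int"
  assumes d_gt: "d > 1"
    and grp: "group Gamma"
    and chi_range: "chi ` carrier Gamma = {..<d}"
    and chi_hom: "\<forall>g\<in>carrier Gamma. \<forall>h\<in>carrier Gamma.
                    chi (g \<otimes>\<^bsub>Gamma\<^esub> h) = (chi g + chi h) mod d"
    and n_ge: "n \<ge> 1"
    and cocycle: "\<forall>gs. set gs \<subseteq> carrier Gamma \<and> length gs = n \<longrightarrow>
                    [cobdry Gamma (\<lambda>g x. x) (n - 1) c gs = 0] (mod int d)"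
  shows "\<forall>gs. set gs \<subseteq> carrier Gamma \<and> length gs = n \<longrightarrow>
           (\<forall>i<d. [h2 d (cobdry Gamma (gr_act d chi) (n - 1) (\<lambda>hs. ell (c hs)) gs) i
                   = d1 d (cup_char chi c gs) i] (mod int d))"
proof (intro allI impI)
  fix gs i assume gs: "set gs \<subseteq> carrier Gamma \<and> length gs = n" and i: "i < d"
  define m where "m = chi (gs ! 0)"
  define a where "a = c (drop 1 gs)"
  define e where "e = cobdry Gamma (\<lambda>g x. x) (n - 1) c gs"
  have "gs ! 0 \<in> set gs" using gs n_ge by simp
  then have "gs ! 0 \<in> carrier Gamma" using gs by blast
  then have m: "m < d" using chi_range m_def by blast
  have e0: "[e = 0] (mod int d)" using cocycle gs e_def by blast
  have X: "cobdry Gamma (gr_act d chi) (n - 1) (\<lambda>hs. ell (c hs)) gs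
      = (\<lambda>k. tau_act d m (ell a) k + ell (e - a) k)"
    unfolding cobdry_ell by (simp add: gr_act_def m_def a_def e_def fun_eq_iff)
  show "[h2 d (cobdry Gamma (gr_act d chi) (n - 1) (\<lambda>hs. ell (c hs)) gs) i
                   = d1 d (cup_char chi c gs) i] (mod int d)"
    unfolding X h2_eval[OF m i] d1_def cup_char_def m_def[symmetric] a_def[symmetric]
    by (rule final_cong) (use d_gt e0 m i in auto)
qed

end
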